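(* Let $\Lambda>0$, $e\ge\Lambda$, $\phi_h>0$, $f:[0,\phi_h]\to(0,1]$ strictly concave, strictly decreasing, differentiable with $f(0)=1$. Consider the two-player game with action sets $[0,\phi_h]$ and payoffs $\tilde{\mathcal M}_i(\phi_i,\phi_{-i})=0$ if $\phi_i>\phi_{-i}$, $=\frac{\Lambda}{2}f(\phi_i)\phi_i$ if $\phi_i=\phi_{-i}$, and $=\min\{\Lambda f(\phi_i),e\}\phi_i$ if $\phi_i<\phi_{-i}$. Let $\epsilon>0$ and suppose $0<\delta\le\phi_h$ satisfies $\sup_{\phi\le\delta}\Lambda f(\phi)\phi<\epsilon$. Then $(\delta,\delta)$ is an $\epsilon$-Nash equilibrium.
   Context: These payoffs are the limiting (driver abandonment rate $\beta\to0$) long-run revenue rates of two symmetric ride-hailing platforms using static prices, when passengers (total Poisson rate $\Lambda$) split across platforms by a Wardrop equilibrium equalizing the probability of not obtaining a ride, in the regime $e\ge\Lambda$ where $e$ is the effective driver arrival rate per platform; $f(\phi)$ is the probability a passenger accepts price $\phi$. A profile $(\phi_1,\phi_2)$ is an $\epsilon$-Nash equilibrium if for each player $i$ and each $\phi_i'\in[0,\phi_h]$, $\tilde{\mathcal M}_i(\phi_i',\phi_{-i})\le\tilde{\mathcal M}_i(\phi_i,\phi_{-i})+\epsilon$. *)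

theory Defs
  imports "HOL-Analysis.Analysis"
begin

definition strict_concave_on :: "real set \<Rightarrow> (real \<Rightarrow> real) \<Rightarrow> bool" where
  "strict_concave_on S f \<longleftrightarrow> convex S \<and>
     (\<forall>x\<in>S. \<forall>y\<in>S. \<forall>t. x \<noteq> y \<and> 0 < t \<and> t < 1 \<longrightarrow>
        f ((1 - t) * x + t * y) > (1 - t) * f x + t * f y)"

definition payoff :: "real \<Rightarrow> real \<Rightarrow> (real \<Rightarrow> real) \<Rightarrow> real \<Rightarrow> real \<Rightarrow> real" where
  "payoff Lam e f phi_i phi_o =
     (if phi_i > phi_o then 0
      else if phi_i = phi_o then Lam / 2 * f phi_i * phi_i
      else min (Lam * f phi_i) e * phi_i)"

definition eps_nash :: "real \<Rightarrow> real \<Rightarrow> (real \<Rightarrow> real) \<Rightarrow> real \<Rightarrow> real \<Rightarrow> real \<Rightarrow> real \<Rightarrow> bool" where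
  "eps_nash Lam e f phi_h eps phi1 phi2 \<longleftrightarrow>
     (\<forall>phi' \<in> {0..phi_h}. payoff Lam e f phi' phi2 \<le> payoff Lam e f phi1 phi2 + eps) \<and>
     (\<forall>phi' \<in> {0..phi_h}. payoff Lam e f phi' phi1 \<le> payoff Lam e f phi2 phi1 + eps)"

end

theory Submission
  imports Defs
begin

theorem theorem6:
  fixes Lam e phi_h eps delta :: real and f :: "real \<Rightarrow> real"
  assumes "Lam > 0" and "e \<ge> Lam" and "phi_h > 0"
    and "\<forall>x\<in>{0..phi_h}. 0 < f x \<and> f x \<le> 1"
    and "strict_concave_on {0..phi_h} f"
    and "strict_mono_on {0..phi_h} (\<lambda>x. - f x)"
    and "\<forall>x\<in>{0..phi_h}. f differentiable (at x within {0..phi_h})"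
    and "f 0 = 1"
    and "eps > 0" and "0 < delta" and "delta \<le> phi_h"
    and "(SUP phi\<in>{0..delta}. Lam * f phi * phi) < eps"
  shows "eps_nash Lam e f phi_h eps delta delta"
proof -
  have fd: "0 < f delta" using assms(4,10,11) by auto
  have p0: "payoff Lam e f delta delta \<ge> 0"
    unfolding payoff_def using fd assms(1,10) by simp
  have bdd: "bdd_above ((\<lambda>phi. Lam * f phi * phi) ` {0..delta})"
  proof (rule bdd_aboveI2)
    fix x assume x: "x \<in> {0..delta}"
    then have "f x \<le> 1" "0 < f x" using assms(4,11) by auto
    then have "f x * x \<le> 1 * delta" using x by (intro mult_mono) auto
    then show "Lam * f x * x \<le> Lam * delta" using assms(1)
      by (metis mult.assoc mult.left_neutral mult_le_cancel_left_pos)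
  qed
  have main: "payoff Lam e f p delta \<le> payoff Lam e f delta delta + eps"
    if p: "p \<in> {0..phi_h}" for p
  proof (cases "p < delta")
    case True
    have "payoff Lam e f p delta = min (Lam * f p) e * p"
      unfolding payoff_def using True by simp
    also have "\<dots> \<le> Lam * f p * p"
      using p by (intro mult_right_mono) auto
    also have "\<dots> \<le> (SUP phi\<in>{0..delta}. Lam * f phi * phi)"
      using p True by (intro cSUP_upper[OF _ bdd]) auto
    finally show ?thesis using assms(12) p0 by linarith
  next
    case False
    then show ?thesis using p0 assms(9) unfolding payoff_def by auto
  qed
  show ?thesis unfolding eps_nash_def using main by blast
qed

end
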